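(* Let $h$ be a signal rate for the model and weight matrix $W$ described in the context, and let $\rho = W^{1/2}\Delta W^{1/2}$. If $\|\rho\| = O(h(p))$ as $p\to\infty$, then the reduction $R(X) = (\Gamma^{T}\Delta^{-1}\Gamma)^{-1}\Gamma^{T}\Delta^{-1}(X-\mu)$ is stable, i.e. $\lim_{p\to\infty}\|\operatorname{var}(R(X))\| < \infty$.
   Context: Observations $(Y_i,X_i)$, $i=1,\dots,n$, are independent, $Y_i\in\mathbb{R}$, $X_i\in\mathbb{R}^p$; asymptotics are as $p\to\infty$ (predictors added), conditional on the responses. Model: $X_i = \mu + \Gamma\xi_i + \varepsilon_i$, with $\mu\in\mathbb{R}^p$, $\Gamma\in\mathbb{R}^{p\times d}$ ($d$ fixed), $\xi_i=\xi(Y_i)\in\mathbb{R}^d$ for an unknown function $\xi$, and $\varepsilon_i$ independent copies of a random vector $\varepsilon$ (independent of the responses) with mean $0$ and variance $\Delta>0$. $W\in\mathbb{R}^{p\times p}$ is a symmetric positive semidefinite population weight matrix, and $\Gamma$ is normalized so that $\Gamma^TW\Gamma$ is diagonal. A signal rate is a positive monotonically increasing function $h(p)=O(p)$ such that $G_h=\Gamma^TW\Gamma/h(p)$ converges as $p\to\infty$ to a diagonal positive definite matrix $G$ with finite entries. $\|\cdot\|$ is the spectral norm. *)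

theory Defs
  imports "HOL-Probability.Probability" "HOL-Library.Landau_Symbols"
    "Jordan_Normal_Form.Matrix"
begin

definition vnorm :: "real vec \<Rightarrow> real" where
  "vnorm v = sqrt (v \<bullet> v)"

definition spec_norm :: "real mat \<Rightarrow> real" where
  "spec_norm A = Sup {vnorm (A *\<^sub>v v) | v. v \<in> carrier_vec (dim_col A) \<and> vnorm v = 1}"

definition sym_mat :: "real mat \<Rightarrow> bool" where
  "sym_mat A \<longleftrightarrow> A \<in> carrier_mat (dim_row A) (dim_row A) \<and> A\<^sup>T = A"

definition psd_mat :: "real mat \<Rightarrow> bool" where
  "psd_mat A \<longleftrightarrow> sym_mat A \<and> (\<forall>v \<in> carrier_vec (dim_row A). v \<bullet> (A *\<^sub>v v) \<ge> 0)"

definition pd_mat :: "real mat \<Rightarrow> bool" where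
  "pd_mat A \<longleftrightarrow> sym_mat A \<and>
     (\<forall>v \<in> carrier_vec (dim_row A). v \<noteq> 0\<^sub>v (dim_row A) \<longrightarrow> v \<bullet> (A *\<^sub>v v) > 0)"

definition mat_inv :: "real mat \<Rightarrow> real mat" where
  "mat_inv A = (SOME B. B \<in> carrier_mat (dim_row A) (dim_row A) \<and>
                        A * B = 1\<^sub>m (dim_row A) \<and> B * A = 1\<^sub>m (dim_row A))"

definition mat_sqrt :: "real mat \<Rightarrow> real mat" where
  "mat_sqrt A = (THE S. psd_mat S \<and> dim_row S = dim_row A \<and> S * S = A)"

abbreviation E :: "'a measure \<Rightarrow> ('a \<Rightarrow> real) \<Rightarrow> real" where
  "E M f \<equiv> integral\<^sup>L M f"

definition cov_mat :: "'a measure \<Rightarrow> ('a \<Rightarrow> real vec) \<Rightarrow> nat \<Rightarrow> real mat" where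
  "cov_mat M Z k = mat k k (\<lambda>(i,j).
      E M (\<lambda>w. (Z w $ i - E M (\<lambda>u. Z u $ i)) * (Z w $ j - E M (\<lambda>u. Z u $ j))))"

definition reduction :: "real mat \<Rightarrow> real mat \<Rightarrow> real vec \<Rightarrow> real vec \<Rightarrow> real vec" where
  "reduction \<Gamma> \<Delta> \<mu> x =
     (mat_inv (\<Gamma>\<^sup>T * mat_inv \<Delta> * \<Gamma>) * \<Gamma>\<^sup>T * mat_inv \<Delta>) *\<^sub>v (x - \<mu>)"

end

theory Submission
  imports Defs "Jordan_Normal_Form.Schur_Decomposition"
begin
no_notation Finite_Cartesian_Product.vec_nth (infixl "$" 90)

lemma real_sym_eigen:
  fixes A :: "real mat"
  assumes A: "A \<in> carrier_mat n n" and n: "n > 0" and sym: "A\<^sup>T = A"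
  shows "\<exists>e v. v \<in> carrier_vec n \<and> v \<noteq> 0\<^sub>v n \<and> A *\<^sub>v v = e \<cdot>\<^sub>v v"
proof -
  let ?Ac = "map_mat (of_real :: real \<Rightarrow> complex) A"
  have Ac: "?Ac \<in> carrier_mat n n" using A by simp
  have deg: "degree (char_poly ?Ac) = n" using degree_monic_char_poly[OF Ac] by simp
  have nc: "\<not> (\<exists>a l. a \<noteq> 0 \<and> l = 0 \<and> char_poly ?Ac = pCons a l)"
  proof
    assume "\<exists>a l. a \<noteq> 0 \<and> l = 0 \<and> char_poly ?Ac = pCons a l"
    then obtain a where "char_poly ?Ac = [:a:]" by auto
    hence "degree (char_poly ?Ac) = 0" by simp
    thus False using deg n by simp
  qed
  obtain z where z: "poly (char_poly ?Ac) z = 0"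
    using fundamental_theorem_of_algebra_alt[OF nc] by blast
  hence "eigenvalue ?Ac z" using eigenvalue_root_char_poly[OF Ac] by simp
  then obtain v where v: "v \<in> carrier_vec n" "v \<noteq> 0\<^sub>v n" "?Ac *\<^sub>v v = z \<cdot>\<^sub>v v"
    unfolding eigenvalue_def eigenvector_def using Ac by auto
  have comp: "(\<Sum>j<n. of_real (A$$(i,j)) * v$j) = z * v$i" if i: "i < n" for i
  proof -
    have "(?Ac *\<^sub>v v) $ i = (z \<cdot>\<^sub>v v) $ i" using v(3) by simp
    thus ?thesis using i A v(1) by (simp add: scalar_prod_def lessThan_atLeast0 row_def)
  qed
  define s where "s = (\<Sum>i<n. \<Sum>j<n. cnj (v$i) * of_real (A$$(i,j)) * v$j)"
  define N where "N = (\<Sum>i<n. cnj (v$i) * v$i)"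
  have sN: "s = z * N"
  proof -
    have "s = (\<Sum>i<n. cnj (v$i) * (\<Sum>j<n. of_real (A$$(i,j)) * v$j))"
      unfolding s_def by (simp add: sum_distrib_left mult.assoc)
    also have "\<dots> = (\<Sum>i<n. cnj (v$i) * (z * v$i))" using comp by simp
    also have "\<dots> = z * N" unfolding N_def by (simp add: sum_distrib_left algebra_simps)
    finally show ?thesis .
  qed
  have Asym: "A$$(i,j) = A$$(j,i)" if "i<n" "j<n" for i j
    using arg_cong[OF sym, of "\<lambda>B. B$$(j,i)"] that A by simp
  have cs: "cnj s = s"
  proof -
    have "cnj s = (\<Sum>i<n. \<Sum>j<n. v$i * of_real (A$$(i,j)) * cnj (v$j))"
      unfolding s_def by (simp add: cnj_sum)
    also have "\<dots> = (\<Sum>j<n. \<Sum>i<n. v$i * of_real (A$$(i,j)) * cnj (v$j))"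
      by (rule sum.swap)
    also have "\<dots> = s" unfolding s_def
      by (intro sum.cong refl, simp add: Asym mult.commute mult.left_commute)
    finally show ?thesis .
  qed
  have Nreal: "N = of_real (\<Sum>i<n. (cmod (v$i))\<^sup>2)"
    unfolding N_def of_real_sum by (intro sum.cong refl, subst complex_norm_square, simp add: mult.commute)
  obtain k where k: "k < n" "v$k \<noteq> 0" using v(1,2) by (metis eq_vecI index_zero_vec(1,2) carrier_vecD)
  have "(\<Sum>i<n. (cmod (v$i))\<^sup>2) > 0"
  proof -
    have "(cmod (v$k))\<^sup>2 \<le> (\<Sum>i<n. (cmod (v$i))\<^sup>2)"
      by (rule member_le_sum, use k in auto)
    moreover have "(cmod (v$k))\<^sup>2 > 0" using k by simp
    ultimately show ?thesis by linarith
  qed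
  then obtain r where Nr: "N = of_real r" and r0: "r > 0" using Nreal by blast
  have N0: "N \<noteq> 0" using Nr r0 by simp
  have cN: "cnj N = N" using Nr by simp
  have "cnj z * N = z * N" using cs sN cN by (metis complex_cnj_mult)
  hence cz: "cnj z = z" using N0 by simp
  have "Im z = 0" using arg_cong[OF cz, of Im] by simp
  hence zr: "z = of_real (Re z)" by (simp add: complex_eq_iff)
  have "poly (char_poly A) (Re z) = 0"
  proof -
    have "of_real (poly (char_poly A) (Re z)) = poly (char_poly ?Ac) (of_real (Re z))"
      unfolding of_real_hom.char_poly_hom[OF A] by (rule of_real_hom.poly_map_poly[symmetric])
    thus ?thesis using z zr by simp
  qed
  hence "eigenvalue A (Re z)" using eigenvalue_root_char_poly[OF A] by simp
  thus ?thesis unfolding eigenvalue_def eigenvector_def using A by auto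
qed

lemma conjugate_real_vec[simp]: "conjugate (w :: real vec) = w"
  unfolding conjugate_vec_def by (intro eq_vecI) simp_all

lemma orth_completion:
  fixes v :: "real vec"
  assumes v: "v \<in> carrier_vec n" and v0: "v \<noteq> 0\<^sub>v n"
  shows "\<exists>W c. W \<in> carrier_mat n n \<and> W\<^sup>T * W = 1\<^sub>m n \<and> W * W\<^sup>T = 1\<^sub>m n \<and> 0 < n \<and> col W 0 = c \<cdot>\<^sub>v v"
proof -
  interpret cof_vec_space n "TYPE(real)" .
  define b where "b = basis_completion v"
  define ws where "ws = gram_schmidt n b"
  from basis_completion[OF v v0, folded b_def]
  have dist_b: "distinct b" and indep: "\<not> lin_dep (set b)" and b: "set b \<subseteq> carrier_vec n"
    and hdb: "hd b = v" and len_b: "length b = n" by auto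
  have n: "n > 0"
  proof (rule ccontr)
    assume "\<not> n > 0"
    hence "v = 0\<^sub>v n" using v by (intro eq_vecI) auto
    with v0 show False by simp
  qed
  from hdb len_b n obtain vs where bv: "b = v # vs" by (cases b, auto)
  from gram_schmidt_result[OF b dist_b indep refl, folded ws_def]
  have ws: "set ws \<subseteq> carrier_vec n" "corthogonal ws" "length ws = n"
    by (auto simp: len_b)
  have hdws: "hd ws = v" unfolding ws_def bv using v by simp
  define us where "us = map (\<lambda>w. (1 / sqrt (w \<bullet> w)) \<cdot>\<^sub>v w) ws"
  have lus: "length us = n" unfolding us_def using ws by simp
  have wsc: "ws ! i \<in> carrier_vec n" if "i < n" for i using ws that by auto
  have usc: "us ! i \<in> carrier_vec n" if "i < n" for i using wsc[OF that] that ws unfolding us_def by simp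
  have orth: "ws ! i \<bullet> ws ! j = 0 \<longleftrightarrow> i \<noteq> j" if "i < n" "j < n" for i j
    using corthogonalD[OF ws(2), of i j] that ws(3) by simp
  have pos: "ws ! i \<bullet> ws ! i > 0" if "i < n" for i
  proof -
    have "ws ! i \<bullet> ws ! i \<ge> 0" using conjugate_square_ge_0_vec[of "ws ! i"] by simp
    thus ?thesis using orth[OF that that] by simp
  qed
  have uorth: "us ! i \<bullet> us ! j = (if i = j then 1 else 0)" if ij: "i < n" "j < n" for i j
  proof -
    have "us ! i \<bullet> us ! j = (1 / sqrt (ws!i \<bullet> ws!i)) * (1 / sqrt (ws!j \<bullet> ws!j)) * (ws ! i \<bullet> ws ! j)"
      unfolding us_def using ij ws wsc[OF ij(1)] wsc[OF ij(2)] by simp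
    moreover have "(1 / sqrt a) * (1 / sqrt a) * a = 1" if "a > 0" for a :: real
      using that by (simp add: field_simps)
    ultimately show ?thesis using orth[OF ij] pos[OF ij(1)]
      by (cases "i = j") auto
  qed
  define W where "W = mat_of_cols n us"
  have W: "W \<in> carrier_mat n n" unfolding W_def using lus mat_of_cols_carrier(1)[of n us] by simp
  have colW: "col W j = us ! j" if "j < n" for j unfolding W_def using that lus usc by simp
  have WtW: "W\<^sup>T * W = 1\<^sub>m n"
    by (rule eq_matI, insert W colW uorth, auto)
  have WWt: "W * W\<^sup>T = 1\<^sub>m n" using mat_mult_left_right_inverse[OF _ W WtW] W by simp
  have "col W 0 = (1 / sqrt (v \<bullet> v)) \<cdot>\<^sub>v v"
  proof -
    have ws0: "ws ! 0 = v" using hd_conv_nth[of ws] hdws ws(3) n by auto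
    show ?thesis using colW[OF n] unfolding us_def using ws n ws0 by simp
  qed
  thus ?thesis using W WtW WWt n by blast
qed

lemma spectral:
  fixes A :: "real mat"
  assumes "A \<in> carrier_mat n n" "A\<^sup>T = A"
  shows "\<exists>Q D. Q \<in> carrier_mat n n \<and> D \<in> carrier_mat n n \<and> diagonal_mat D \<and>
     Q\<^sup>T * Q = 1\<^sub>m n \<and> Q * Q\<^sup>T = 1\<^sub>m n \<and> A = Q * D * Q\<^sup>T"
  using assms
proof (induction n arbitrary: A)
  case 0
  have "A = 1\<^sub>m 0 * 1\<^sub>m 0 * (1\<^sub>m 0)\<^sup>T" using 0 by (intro eq_matI) auto
  moreover have "diagonal_mat (1\<^sub>m 0 :: real mat)" unfolding diagonal_mat_def by auto
  ultimately show ?case by (intro exI[of _ "1\<^sub>m 0"]) auto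
next
  case (Suc m A)
  note A = Suc.prems(1) and sym = Suc.prems(2)
  let ?n = "Suc m"
  obtain e v where v: "v \<in> carrier_vec ?n" "v \<noteq> 0\<^sub>v ?n" and Av: "A *\<^sub>v v = e \<cdot>\<^sub>v v"
    using real_sym_eigen[OF A _ sym] by auto
  obtain W c where W: "W \<in> carrier_mat ?n ?n" and WtW: "W\<^sup>T * W = 1\<^sub>m ?n"
    and WWt: "W * W\<^sup>T = 1\<^sub>m ?n" and cW: "col W 0 = c \<cdot>\<^sub>v v"
    using orth_completion[OF v] by auto
  have Au: "A *\<^sub>v col W 0 = e \<cdot>\<^sub>v col W 0"
    unfolding cW using mult_mat_vec[OF A v(1)] Av v(1)
    by (simp add: smult_smult_assoc mult.commute)
  define A' where "A' = W\<^sup>T * A * W"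
  have A': "A' \<in> carrier_mat ?n ?n" unfolding A'_def using W A by auto
  have A'sym: "A'\<^sup>T = A'"
  proof -
    have "A' = W\<^sup>T * (A * W)" unfolding A'_def using W A by simp
    hence "A'\<^sup>T = (A * W)\<^sup>T * W" using transpose_mult[of "W\<^sup>T" ?n ?n "A * W" ?n] W A by simp
    also have "(A * W)\<^sup>T = W\<^sup>T * A" using transpose_mult[OF A W] sym by simp
    finally show ?thesis unfolding A'_def .
  qed
  have A'col: "A' $$ (i, 0) = (if i = 0 then e else 0)" if i: "i < ?n" for i
  proof -
    have "A' = W\<^sup>T * (A * W)" unfolding A'_def using W A by simp
    hence "A' $$ (i,0) = row (W\<^sup>T) i \<bullet> col (A * W) 0" using i W A by simp
    also have "\<dots> = col W i \<bullet> (A *\<^sub>v col W 0)" using i W A by simp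
    also have "\<dots> = e * (col W i \<bullet> col W 0)" unfolding Au using W by simp
    also have "col W i \<bullet> col W 0 = (W\<^sup>T * W) $$ (i,0)" using i W by simp
    finally show ?thesis unfolding WtW using i by simp
  qed
  have A'row: "A' $$ (0, j) = (if j = 0 then e else 0)" if j: "j < ?n" for j
    using A'col[OF j] arg_cong[OF A'sym, of "\<lambda>B. B $$ (0,j)"] j A' by simp
  define A3 where "A3 = mat m m (\<lambda>(i,j). A' $$ (Suc i, Suc j))"
  have A3: "A3 \<in> carrier_mat m m" unfolding A3_def by simp
  have A3sym: "A3\<^sup>T = A3"
  proof (rule eq_matI)
    fix i j assume "i < dim_row A3" "j < dim_col A3"
    thus "A3\<^sup>T $$ (i,j) = A3 $$ (i,j)"
      using arg_cong[OF A'sym, of "\<lambda>B. B $$ (Suc i, Suc j)"] A' unfolding A3_def by simp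
  qed (auto simp: A3_def)
  obtain Q3 D3 where Q3: "Q3 \<in> carrier_mat m m" and D3: "D3 \<in> carrier_mat m m"
    and dD3: "diagonal_mat D3" and Q3tQ3: "Q3\<^sup>T * Q3 = 1\<^sub>m m" and Q3Q3t: "Q3 * Q3\<^sup>T = 1\<^sub>m m"
    and A3eq: "A3 = Q3 * D3 * Q3\<^sup>T"
    using Suc.IH[OF A3 A3sym] by auto
  define E where "E = mat 1 1 (\<lambda>_. e)"
  have E: "E \<in> carrier_mat 1 1" unfolding E_def by simp
  define Q' where "Q' = four_block_mat (1\<^sub>m 1) (0\<^sub>m 1 m) (0\<^sub>m m 1) Q3"
  define D' where "D' = four_block_mat E (0\<^sub>m 1 m) (0\<^sub>m m 1) D3"
  have Q': "Q' \<in> carrier_mat ?n ?n" unfolding Q'_def using Q3 four_block_carrier_mat[of "1\<^sub>m 1" 1 1 Q3 m m] by simp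
  have D': "D' \<in> carrier_mat ?n ?n" unfolding D'_def using D3 E four_block_carrier_mat[of E 1 1 D3 m m] by simp
  have Q3t: "Q3\<^sup>T \<in> carrier_mat m m" using Q3 by simp
  have Q't: "Q'\<^sup>T = four_block_mat (1\<^sub>m 1) (0\<^sub>m 1 m) (0\<^sub>m m 1) Q3\<^sup>T"
    unfolding Q'_def using transpose_four_block_mat[OF one_carrier_mat zero_carrier_mat zero_carrier_mat Q3] by simp
  have Q'tQ': "Q'\<^sup>T * Q' = 1\<^sub>m ?n"
    unfolding Q't unfolding Q'_def using Q3
    by (subst mult_four_block_mat[OF one_carrier_mat zero_carrier_mat zero_carrier_mat Q3t one_carrier_mat zero_carrier_mat zero_carrier_mat Q3], auto simp: Q3tQ3)
  have Q'Q't: "Q' * Q'\<^sup>T = 1\<^sub>m ?n"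
    unfolding Q't unfolding Q'_def using Q3
    by (subst mult_four_block_mat[OF one_carrier_mat zero_carrier_mat zero_carrier_mat Q3 one_carrier_mat zero_carrier_mat zero_carrier_mat Q3t], auto simp: Q3Q3t)
  have A'blk: "A' = four_block_mat E (0\<^sub>m 1 m) (0\<^sub>m m 1) A3"
    by (rule eq_matI, insert A' A'col A'row, auto simp: E_def A3_def)
  have P1: "Q' * D' = four_block_mat E (0\<^sub>m 1 m) (0\<^sub>m m 1) (Q3 * D3)"
    unfolding Q'_def D'_def
    by (subst mult_four_block_mat[OF one_carrier_mat zero_carrier_mat zero_carrier_mat Q3 E zero_carrier_mat zero_carrier_mat D3], insert Q3 D3 E, auto)
  have Q3D3: "Q3 * D3 \<in> carrier_mat m m" using Q3 D3 by simp
  have "Q' * D' * Q'\<^sup>T = four_block_mat E (0\<^sub>m 1 m) (0\<^sub>m m 1) (Q3 * D3 * Q3\<^sup>T)"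
    unfolding P1 Q't
    by (subst mult_four_block_mat[OF E zero_carrier_mat zero_carrier_mat Q3D3 one_carrier_mat zero_carrier_mat zero_carrier_mat Q3t], insert Q3 D3 E, auto)
  hence A'eq: "A' = Q' * D' * Q'\<^sup>T" unfolding A'blk A3eq by simp
  have dD': "diagonal_mat D'"
    unfolding diagonal_mat_def D'_def using dD3 D3 E
    by (auto simp: E_def diagonal_mat_def)
  define Q where "Q = W * Q'"
  have Q: "Q \<in> carrier_mat ?n ?n" unfolding Q_def using W Q' by simp
  have Qt: "Q\<^sup>T = Q'\<^sup>T * W\<^sup>T" unfolding Q_def using W Q' by (simp add: transpose_mult)
  have "Q\<^sup>T * Q = Q'\<^sup>T * (W\<^sup>T * W) * Q'" unfolding Qt unfolding Q_def using W Q'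
    by (simp add: assoc_mult_mat[of _ ?n ?n _ ?n _ ?n])
  hence QtQ: "Q\<^sup>T * Q = 1\<^sub>m ?n" unfolding WtW using Q' Q'tQ' by simp
  have "Q * Q\<^sup>T = W * (Q' * Q'\<^sup>T) * W\<^sup>T" unfolding Qt unfolding Q_def using W Q'
    by (simp add: assoc_mult_mat[of _ ?n ?n _ ?n _ ?n])
  hence QQt: "Q * Q\<^sup>T = 1\<^sub>m ?n" unfolding Q'Q't using W WWt by simp
  have "Q * D' * Q\<^sup>T = W * (Q' * D' * Q'\<^sup>T) * W\<^sup>T" unfolding Qt unfolding Q_def using W Q' D'
    by (simp add: assoc_mult_mat[of _ ?n ?n _ ?n _ ?n])
  also have "\<dots> = W * A' * W\<^sup>T" unfolding A'eq ..
  also have "\<dots> = (W * W\<^sup>T) * A * (W * W\<^sup>T)" unfolding A'_def using W A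
    by (simp add: assoc_mult_mat[of _ ?n ?n _ ?n _ ?n])
  also have "\<dots> = A" unfolding WWt using A by simp
  finally show ?case using Q D' dD' QtQ QQt by metis
qed

lemma dot_self_ge0: "(v :: real vec) \<bullet> v \<ge> 0"
  using conjugate_square_ge_0_vec[of v] by simp

lemma dot_self_eq0: "(v :: real vec) \<in> carrier_vec n \<Longrightarrow> v \<bullet> v = 0 \<longleftrightarrow> v = 0\<^sub>v n"
  using conjugate_square_eq_0_vec[of v n] by simp

lemma sym_dot:
  fixes T :: "real mat"
  assumes T: "T \<in> carrier_mat n n" and sym: "T\<^sup>T = T" and x: "x \<in> carrier_vec n" and y: "y \<in> carrier_vec n"
  shows "x \<bullet> (T *\<^sub>v y) = (T *\<^sub>v x) \<bullet> y"
  using transpose_vec_mult_scalar[OF T y x] sym by simp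

lemma psd_sqrt_eigen:
  fixes T W :: "real mat"
  assumes T: "T \<in> carrier_mat n n" and sym: "T\<^sup>T = T"
    and psd: "\<And>x. x \<in> carrier_vec n \<Longrightarrow> x \<bullet> (T *\<^sub>v x) \<ge> 0"
    and TT: "T * T = W" and q: "q \<in> carrier_vec n" and Wq: "W *\<^sub>v q = l \<cdot>\<^sub>v q" and l: "l \<ge> 0"
  shows "T *\<^sub>v q = sqrt l \<cdot>\<^sub>v q"
proof -
  define s where "s = sqrt l"
  have ss: "s * s = l" unfolding s_def using l by simp
  have TTq: "T *\<^sub>v (T *\<^sub>v q) = l \<cdot>\<^sub>v q" using Wq TT T q by (metis assoc_mult_mat_vec)
  have Tq: "T *\<^sub>v q \<in> carrier_vec n" using T q by simp
  show ?thesis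
  proof (cases "l = 0")
    case True
    have "(T *\<^sub>v q) \<bullet> (T *\<^sub>v q) = q \<bullet> (T *\<^sub>v (T *\<^sub>v q))"
      using sym_dot[OF T sym q Tq] by simp
    also have "\<dots> = 0" unfolding TTq True using q by simp
    finally have "T *\<^sub>v q = 0\<^sub>v n" using dot_self_eq0[OF Tq] by simp
    thus ?thesis using True q by auto
  next
    case False
    hence s0: "s > 0" unfolding s_def using l by simp
    define w where "w = T *\<^sub>v q - s \<cdot>\<^sub>v q"
    have w: "w \<in> carrier_vec n" unfolding w_def using Tq q by simp
    have Tw: "T *\<^sub>v w = (- s) \<cdot>\<^sub>v w"
    proof -
      have "T *\<^sub>v w = T *\<^sub>v (T *\<^sub>v q) - T *\<^sub>v (s \<cdot>\<^sub>v q)"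
        unfolding w_def using T Tq q by (simp add: mult_minus_distrib_mat_vec)
      also have "\<dots> = l \<cdot>\<^sub>v q - s \<cdot>\<^sub>v (T *\<^sub>v q)" unfolding TTq using mult_mat_vec[OF T q] by simp
      also have "\<dots> = (- s) \<cdot>\<^sub>v w" unfolding w_def using carrier_vecD[OF Tq] carrier_vecD[OF q] ss[symmetric]
        by (intro eq_vecI) (auto simp: algebra_simps)
      finally show ?thesis .
    qed
    have "0 \<le> w \<bullet> (T *\<^sub>v w)" using psd[OF w] .
    also have "\<dots> = - s * (w \<bullet> w)" unfolding Tw using w by simp
    finally have "w \<bullet> w \<le> 0" using s0 by (simp add: mult_le_0_iff)
    hence "w \<bullet> w = 0" using dot_self_ge0[of w] by linarith
    hence "w = 0\<^sub>v n" using dot_self_eq0[OF w] by simp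
    hence w0: "w = 0\<^sub>v n" .
    have "T *\<^sub>v q = s \<cdot>\<^sub>v q"
    proof (rule eq_vecI)
      fix i assume "i < dim_vec (s \<cdot>\<^sub>v q)"
      hence i: "i < n" using q by simp
      have "w $ i = 0" using w0 i by simp
      thus "(T *\<^sub>v q) $ i = (s \<cdot>\<^sub>v q) $ i" unfolding w_def using i carrier_vecD[OF Tq] carrier_vecD[OF q] by simp
    qed (use Tq q T in simp)
    thus ?thesis unfolding s_def .
  qed
qed

lemma mat_unit_col: fixes Q :: "real mat" assumes "Q \<in> carrier_mat n m" "i < m" shows "Q *\<^sub>v unit_vec m i = col Q i"
proof -
  have "dim_row Q = n" "dim_col Q = m" using assms by auto
  thus ?thesis using assms(2) by (intro eq_vecI) auto
qed

lemma mat_eq_by_cols: "A \<in> carrier_mat n m \<Longrightarrow> B \<in> carrier_mat n m \<Longrightarrow> (\<And>i. i < m \<Longrightarrow> col A i = col B i) \<Longrightarrow> A = B"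
  by (intro eq_matI) (metis carrier_matD index_col)+

lemma psd_sqrt_ex1:
  fixes W :: "real mat"
  assumes psdW: "psd_mat W"
  shows "\<exists>!S. psd_mat S \<and> dim_row S = dim_row W \<and> S * S = W"
proof -
  define n where "n = dim_row W"
  have W: "W \<in> carrier_mat n n" and Wsym: "W\<^sup>T = W"
    using psdW unfolding psd_mat_def sym_mat_def n_def by auto
  have Wpsd: "\<And>x. x \<in> carrier_vec n \<Longrightarrow> x \<bullet> (W *\<^sub>v x) \<ge> 0"
    using psdW unfolding psd_mat_def n_def by auto
  obtain Q D where Q: "Q \<in> carrier_mat n n" and D: "D \<in> carrier_mat n n" and dD: "diagonal_mat D"
    and QtQ: "Q\<^sup>T * Q = 1\<^sub>m n" and QQt: "Q * Q\<^sup>T = 1\<^sub>m n" and Weq: "W = Q * D * Q\<^sup>T"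
    using spectral[OF W Wsym] by auto
  have WQ: "W * Q = Q * D"
  proof -
    have "W * Q = Q * D * (Q\<^sup>T * Q)" unfolding Weq using Q D by (simp add: assoc_mult_mat[of _ n n _ n _ n])
    thus ?thesis unfolding QtQ using Q D by simp
  qed
  have colD: "col D i = D $$ (i,i) \<cdot>\<^sub>v unit_vec n i" if i: "i < n" for i
    using dD D i unfolding diagonal_mat_def by (intro eq_vecI) auto
  have Wcol: "W *\<^sub>v col Q i = D $$ (i,i) \<cdot>\<^sub>v col Q i" if i: "i < n" for i
  proof -
    have "W *\<^sub>v col Q i = col (W * Q) i" using W Q i by simp
    also have "\<dots> = Q *\<^sub>v col D i" unfolding WQ using Q D i by simp
    also have "\<dots> = D $$ (i,i) \<cdot>\<^sub>v col Q i" unfolding colD[OF i]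
      using mult_mat_vec[OF Q unit_vec_carrier] mat_unit_col[OF Q i] by simp
    finally show ?thesis .
  qed
  have colQ: "col Q i \<in> carrier_vec n" for i using Q col_dim[of Q i] by simp
  have Dnn: "D $$ (i,i) \<ge> 0" if i: "i < n" for i
  proof -
    have "0 \<le> col Q i \<bullet> (W *\<^sub>v col Q i)" using Wpsd[OF colQ] .
    also have "\<dots> = D $$ (i,i) * (col Q i \<bullet> col Q i)" unfolding Wcol[OF i] using colQ[of i] by simp
    also have "col Q i \<bullet> col Q i = 1"
      using arg_cong[OF QtQ, of "\<lambda>M. M $$ (i,i)"] Q i by simp
    finally show ?thesis by simp
  qed
  define R where "R = mat n n (\<lambda>(i,j). if i = j then sqrt (D $$ (i,i)) else 0)"
  have R: "R \<in> carrier_mat n n" unfolding R_def by simp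
  have Rt: "R\<^sup>T = R" unfolding R_def by (intro eq_matI) auto
  have colR: "col R i = sqrt (D $$ (i,i)) \<cdot>\<^sub>v unit_vec n i" if i: "i < n" for i
    unfolding R_def using i by (intro eq_vecI) auto
  have rowR: "row R i = sqrt (D $$ (i,i)) \<cdot>\<^sub>v unit_vec n i" if i: "i < n" for i
    unfolding R_def using i by (intro eq_vecI) auto
  have RR: "R * R = D"
  proof (rule eq_matI)
    fix i j assume "i < dim_row D" "j < dim_col D"
    hence i: "i < n" and j: "j < n" using D by auto
    have "(R * R) $$ (i,j) = row R i \<bullet> col R j" using R i j by simp
    also have "\<dots> = sqrt (D $$ (i,i)) * sqrt (D $$ (j,j)) * (unit_vec n i \<bullet> unit_vec n j)"
      unfolding rowR[OF i] colR[OF j] by simp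
    also have "\<dots> = D $$ (i,j)"
      using Dnn[OF i] dD D i j unfolding diagonal_mat_def by (auto simp: real_sqrt_mult[symmetric])
    finally show "(R * R) $$ (i,j) = D $$ (i,j)" .
  qed (use R D in auto)
  define S where "S = Q * R * Q\<^sup>T"
  have S: "S \<in> carrier_mat n n" unfolding S_def using Q R by simp
  have St: "S\<^sup>T = S"
  proof -
    have "S\<^sup>T = (Q\<^sup>T)\<^sup>T * (Q * R)\<^sup>T" unfolding S_def using transpose_mult[of "Q * R" n n "Q\<^sup>T" n] Q R by simp
    also have "(Q * R)\<^sup>T = R * Q\<^sup>T" using transpose_mult[OF Q R] Rt by simp
    finally show ?thesis unfolding S_def using Q R by simp
  qed
  have SS: "S * S = W"
  proof -
    have "S * S = Q * R * (Q\<^sup>T * Q) * R * Q\<^sup>T" unfolding S_def using Q R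
      by (simp add: assoc_mult_mat[of _ n n _ n _ n])
    also have "\<dots> = Q * (R * R) * Q\<^sup>T" unfolding QtQ using Q R
      by (simp add: assoc_mult_mat[of _ n n _ n _ n])
    finally show ?thesis unfolding RR Weq .
  qed
  have Spsd: "x \<bullet> (S *\<^sub>v x) \<ge> 0" if x: "x \<in> carrier_vec n" for x
  proof -
    define y where "y = Q\<^sup>T *\<^sub>v x"
    have y: "y \<in> carrier_vec n" unfolding y_def using Q x by simp
    have "x \<bullet> (S *\<^sub>v x) = x \<bullet> (Q *\<^sub>v (R *\<^sub>v y))" unfolding S_def y_def using Q R x
      assoc_mult_mat_vec[of Q n n "R * Q\<^sup>T" n x] assoc_mult_mat_vec[of R n n "Q\<^sup>T" n x] by simp
    also have "\<dots> = y \<bullet> (R *\<^sub>v y)" unfolding y_def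
      using transpose_vec_mult_scalar[OF Q _ x, of "R *\<^sub>v y"] R y by (simp add: y_def)
    also have "\<dots> = (\<Sum>i<n. y $ i * (sqrt (D $$ (i,i)) * y $ i))"
    proof -
      have "R *\<^sub>v y = vec n (\<lambda>i. sqrt (D $$ (i,i)) * y $ i)"
        using R y rowR by (intro eq_vecI) auto
      thus ?thesis using y by (simp add: scalar_prod_def lessThan_atLeast0)
    qed
    also have "\<dots> \<ge> 0"
    proof (intro sum_nonneg)
      fix i assume "i \<in> {..<n}"
      hence sn: "sqrt (D $$ (i,i)) \<ge> 0" using Dnn by simp
      have eq: "y $ i * (sqrt (D $$ (i,i)) * y $ i) = sqrt (D $$ (i,i)) * (y $ i)\<^sup>2"
        by (simp add: power2_eq_square)
      have h: "0 \<le> sqrt (D $$ (i,i)) * (y $ i)\<^sup>2" using mult_nonneg_nonneg[OF sn zero_le_power2] .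
      show "0 \<le> y $ i * (sqrt (D $$ (i,i)) * y $ i)" using h eq by linarith
    qed
    finally show ?thesis .
  qed
  have Sprops: "psd_mat S \<and> dim_row S = dim_row W \<and> S * S = W"
  proof -
    have dS: "dim_row S = n" using S by simp
    have "psd_mat S" unfolding psd_mat_def sym_mat_def dS using S St Spsd by blast
    thus ?thesis using dS SS n_def by simp
  qed
  have uniq: "T = S" if T: "psd_mat T \<and> dim_row T = dim_row W \<and> T * T = W" for T
  proof -
    have dT: "dim_row T = n" using T n_def by simp
    have Tc: "T \<in> carrier_mat n n" and Tt: "T\<^sup>T = T" and TT: "T * T = W"
      using T unfolding psd_mat_def sym_mat_def dT by blast+
    have Tpsd: "\<And>x. x \<in> carrier_vec n \<Longrightarrow> x \<bullet> (T *\<^sub>v x) \<ge> 0"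
      using T unfolding psd_mat_def dT by blast
    have "T * Q = Q * R"
    proof (rule mat_eq_by_cols[of _ n n])
      fix i assume i: "i < n"
      have "col (T * Q) i = T *\<^sub>v col Q i" using Tc Q i by simp
      also have "\<dots> = sqrt (D $$ (i,i)) \<cdot>\<^sub>v col Q i"
        by (rule psd_sqrt_eigen[OF Tc Tt Tpsd TT colQ Wcol[OF i] Dnn[OF i]])
      also have "\<dots> = col (Q * R) i" using Q R i colR[OF i]
        using mult_mat_vec[OF Q unit_vec_carrier] mat_unit_col[OF Q i] by simp
      finally show "col (T * Q) i = col (Q * R) i" .
    qed (use Tc Q R in auto)
    hence "T * (Q * Q\<^sup>T) = Q * R * Q\<^sup>T" using Tc Q by (simp add: assoc_mult_mat[of _ n n _ n _ n, symmetric])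
    thus ?thesis unfolding QQt S_def using Tc by simp
  qed
  show ?thesis using Sprops uniq by blast
qed

lemma mat_sqrt_props:
  assumes "psd_mat W"
  shows "psd_mat (mat_sqrt W) \<and> dim_row (mat_sqrt W) = dim_row W \<and> mat_sqrt W * mat_sqrt W = W"
  unfolding mat_sqrt_def by (rule theI'[OF psd_sqrt_ex1[OF assms]])

lemma inv_exists:
  fixes A :: "real mat"
  assumes A: "A \<in> carrier_mat n n"
    and inj: "\<And>v. v \<in> carrier_vec n \<Longrightarrow> A *\<^sub>v v = 0\<^sub>v n \<Longrightarrow> v = 0\<^sub>v n"
  shows "mat_inv A \<in> carrier_mat n n \<and> A * mat_inv A = 1\<^sub>m n \<and> mat_inv A * A = 1\<^sub>m n"
proof -
  have "det A \<noteq> 0" using det_0_iff_vec_prod_zero[OF A] inj by auto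
  hence U: "A \<in> Units (ring_mat TYPE(real) n ())" by (rule det_non_zero_imp_unit[OF A])
  obtain B where B: "B \<in> carrier_mat n n \<and> A * B = 1\<^sub>m n \<and> B * A = 1\<^sub>m n"
  proof (cases "mat_inverse A")
    case None thus ?thesis using mat_inverse(1)[OF A None, of "()"] U by blast
  next
    case (Some B) thus ?thesis using mat_inverse(2)[OF A Some] that by blast
  qed
  have dA: "dim_row A = n" using A by simp
  show ?thesis unfolding mat_inv_def dA by (rule someI[of _ B], use B in blast)
qed

lemma quad_cs:
  fixes B :: "real mat"
  assumes B: "B \<in> carrier_mat n n" and sym: "B\<^sup>T = B"
    and psd: "\<And>z. z \<in> carrier_vec n \<Longrightarrow> z \<bullet> (B *\<^sub>v z) \<ge> 0"
    and x: "x \<in> carrier_vec n" and y: "y \<in> carrier_vec n"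
  shows "(x \<bullet> (B *\<^sub>v y))\<^sup>2 \<le> (x \<bullet> (B *\<^sub>v x)) * (y \<bullet> (B *\<^sub>v y))"
proof -
  define a where "a = x \<bullet> (B *\<^sub>v x)"
  define b where "b = x \<bullet> (B *\<^sub>v y)"
  define c where "c = y \<bullet> (B *\<^sub>v y)"
  have yx: "y \<bullet> (B *\<^sub>v x) = b" unfolding b_def using sym_dot[OF B sym y x] comm_scalar_prod[of "B *\<^sub>v y" n x] B x y by simp
  have q: "a + 2 * t * b + t\<^sup>2 * c \<ge> 0" for t
  proof -
    have xt: "x + t \<cdot>\<^sub>v y \<in> carrier_vec n" using x y by simp
    have Bx: "B *\<^sub>v x \<in> carrier_vec n" "B *\<^sub>v y \<in> carrier_vec n" using B x y by auto
    have "B *\<^sub>v (x + t \<cdot>\<^sub>v y) = B *\<^sub>v x + t \<cdot>\<^sub>v (B *\<^sub>v y)"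
      using B x y by (simp add: mult_add_distrib_mat_vec mult_mat_vec)
    hence "(x + t \<cdot>\<^sub>v y) \<bullet> (B *\<^sub>v (x + t \<cdot>\<^sub>v y)) = a + 2 * t * b + t\<^sup>2 * c"
      unfolding a_def c_def using x y Bx yx
      by (simp add: add_scalar_prod_distrib[of _ n] scalar_prod_add_distrib[of _ n] algebra_simps power2_eq_square b_def[symmetric])
    thus ?thesis using psd[OF xt] by simp
  qed
  have c0: "c \<ge> 0" unfolding c_def using psd[OF y] .
  show ?thesis
  proof (cases "c = 0")
    case True
    have "b = 0"
    proof (rule ccontr)
      assume "b \<noteq> 0"
      have "a + 2 * (- (a + 1) / (2 * b)) * b + (- (a + 1) / (2 * b))\<^sup>2 * c \<ge> 0" by (rule q)
      thus False using True \<open>b \<noteq> 0\<close> by (simp add: field_simps)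
    qed
    thus ?thesis unfolding a_def[symmetric] b_def[symmetric] c_def[symmetric] using True by simp
  next
    case False
    hence cp: "c > 0" using c0 by simp
    have "a + 2 * (- b / c) * b + (- b / c)\<^sup>2 * c \<ge> 0" by (rule q)
    hence "a * c - b\<^sup>2 \<ge> 0" using cp by (simp add: field_simps power2_eq_square)
    thus ?thesis unfolding a_def[symmetric] b_def[symmetric] c_def[symmetric] by (simp add: mult.commute)
  qed
qed

lemma dot_cs:
  fixes x y :: "real vec"
  assumes x: "x \<in> carrier_vec n" and y: "y \<in> carrier_vec n"
  shows "(x \<bullet> y)\<^sup>2 \<le> (x \<bullet> x) * (y \<bullet> y)"
  using quad_cs[of "1\<^sub>m n" n x y] x y dot_self_ge0 by simp

lemma vnorm_smult: "vnorm (c \<cdot>\<^sub>v w) = \<bar>c\<bar> * vnorm w"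
proof -
  have "(c \<cdot>\<^sub>v w) \<bullet> (c \<cdot>\<^sub>v w) = c\<^sup>2 * (w \<bullet> w)"
    by (simp add: power2_eq_square mult.assoc)
  thus ?thesis unfolding vnorm_def by (simp add: real_sqrt_mult)
qed

lemma vnorm_ge0: "vnorm v \<ge> 0" unfolding vnorm_def using dot_self_ge0[of v] by simp

lemma vnorm_sq: "(vnorm v)\<^sup>2 = v \<bullet> v" unfolding vnorm_def using dot_self_ge0[of v] by simp

lemma spec_set_bdd:
  fixes M :: "real mat"
  assumes M: "M \<in> carrier_mat n m"
  shows "bdd_above {vnorm (M *\<^sub>v v) | v. v \<in> carrier_vec (dim_col M) \<and> vnorm v = 1}"
proof -
  define F where "F = sqrt (\<Sum>i<n. row M i \<bullet> row M i)"
  have "vnorm (M *\<^sub>v v) \<le> F" if v: "v \<in> carrier_vec m" "vnorm v = 1" for v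
  proof -
    have vv: "v \<bullet> v = 1" using vnorm_sq[of v] v(2) by simp
    have "(M *\<^sub>v v) \<bullet> (M *\<^sub>v v) = (\<Sum>i<n. (row M i \<bullet> v)\<^sup>2)"
      using M v by (simp add: scalar_prod_def lessThan_atLeast0 power2_eq_square)
    also have "\<dots> \<le> (\<Sum>i<n. (row M i \<bullet> row M i) * (v \<bullet> v))"
      by (intro sum_mono dot_cs[of _ m]) (use M v in auto)
    also have "\<dots> = (\<Sum>i<n. row M i \<bullet> row M i)" using vv by simp
    finally show ?thesis unfolding vnorm_def F_def by (rule real_sqrt_le_mono)
  qed
  thus ?thesis using M by (intro bdd_aboveI[of _ F]) auto
qed

lemma spec_norm_bound:
  fixes M :: "real mat"
  assumes M: "M \<in> carrier_mat n m" and m: "m > 0" and z: "z \<in> carrier_vec m"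
  shows "vnorm (M *\<^sub>v z) \<le> spec_norm M * vnorm z" and "spec_norm M \<ge> 0"
proof -
  let ?S = "{vnorm (M *\<^sub>v v) | v. v \<in> carrier_vec (dim_col M) \<and> vnorm v = 1}"
  have bdd: "bdd_above ?S" by (rule spec_set_bdd[OF M])
  have mem: "vnorm (M *\<^sub>v v) \<le> spec_norm M" if "v \<in> carrier_vec m" "vnorm v = 1" for v
    unfolding spec_norm_def by (rule cSup_upper[OF _ bdd], use that M in auto)
  have u: "unit_vec m 0 \<in> carrier_vec m" "vnorm (unit_vec m 0) = 1"
    using m unfolding vnorm_def by auto
  show "spec_norm M \<ge> 0" using mem[OF u] vnorm_ge0 by (meson order_trans)
  show "vnorm (M *\<^sub>v z) \<le> spec_norm M * vnorm z"
  proof (cases "z = 0\<^sub>v m")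
    case True
    have "M *\<^sub>v z = 0\<^sub>v n" using M True by (intro eq_vecI) auto
    thus ?thesis using True by (simp add: vnorm_def)
  next
    case False
    have zp: "vnorm z > 0" using False z dot_self_eq0[OF z] dot_self_ge0[of z] unfolding vnorm_def by simp
    define v where "v = (1 / vnorm z) \<cdot>\<^sub>v z"
    have v: "v \<in> carrier_vec m" "vnorm v = 1" unfolding v_def using z zp by (auto simp: vnorm_smult)
    have "M *\<^sub>v z = vnorm z \<cdot>\<^sub>v (M *\<^sub>v v)" unfolding v_def using M z zp
      by (simp add: mult_mat_vec smult_smult_assoc)
    hence "vnorm (M *\<^sub>v z) = vnorm z * vnorm (M *\<^sub>v v)" using zp by (simp add: vnorm_smult)
    also have "\<dots> \<le> vnorm z * spec_norm M" using mem[OF v] zp by simp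
    finally show ?thesis by (simp add: mult.commute)
  qed
qed

lemma spec_norm_le:
  fixes M :: "real mat"
  assumes M: "M \<in> carrier_mat n m" and m: "m > 0"
    and b: "\<And>v. v \<in> carrier_vec m \<Longrightarrow> vnorm v = 1 \<Longrightarrow> vnorm (M *\<^sub>v v) \<le> c"
  shows "spec_norm M \<le> c"
proof -
  have u: "unit_vec m 0 \<in> carrier_vec m" "vnorm (unit_vec m 0) = 1"
    using m unfolding vnorm_def by auto
  show ?thesis unfolding spec_norm_def
    by (rule cSup_least, use u M in blast, use b M in auto)
qed

lemma dot_le_norms:
  fixes z w :: "real vec"
  assumes "z \<in> carrier_vec n" "w \<in> carrier_vec n"
  shows "z \<bullet> w \<le> vnorm z * vnorm w"
proof -
  have "(z \<bullet> w)\<^sup>2 \<le> (z \<bullet> z) * (w \<bullet> w)" by (rule dot_cs[OF assms])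
  hence "\<bar>z \<bullet> w\<bar> \<le> sqrt ((z \<bullet> z) * (w \<bullet> w))" by (metis real_sqrt_abs real_sqrt_le_mono)
  thus ?thesis unfolding vnorm_def by (simp add: real_sqrt_mult)
qed

lemma pd_inv:
  fixes D :: "real mat"
  assumes D: "D \<in> carrier_mat p p" and pd: "pd_mat D"
  shows "mat_inv D \<in> carrier_mat p p \<and> D * mat_inv D = 1\<^sub>m p \<and> mat_inv D * D = 1\<^sub>m p
     \<and> (mat_inv D)\<^sup>T = mat_inv D \<and> D\<^sup>T = D \<and> (\<forall>v \<in> carrier_vec p. v \<bullet> (D *\<^sub>v v) \<ge> 0)"
proof -
  have dD: "dim_row D = p" using D by simp
  have Dsym: "D\<^sup>T = D" using pd unfolding pd_mat_def sym_mat_def by auto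
  have pos: "v \<in> carrier_vec p \<Longrightarrow> v \<noteq> 0\<^sub>v p \<Longrightarrow> v \<bullet> (D *\<^sub>v v) > 0" for v
    using pd unfolding pd_mat_def dD by auto
  have inj: "v = 0\<^sub>v p" if "v \<in> carrier_vec p" "D *\<^sub>v v = 0\<^sub>v p" for v
  proof (rule ccontr)
    assume "v \<noteq> 0\<^sub>v p"
    hence "v \<bullet> (D *\<^sub>v v) > 0" using pos that(1) by blast
    moreover have "v \<bullet> (D *\<^sub>v v) = 0" using that(2) that(1) by simp
    ultimately show False by simp
  qed
  have nn: "\<forall>v \<in> carrier_vec p. v \<bullet> (D *\<^sub>v v) \<ge> 0"
  proof
    fix v :: "real vec" assume v: "v \<in> carrier_vec p"
    show "v \<bullet> (D *\<^sub>v v) \<ge> 0"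
    proof (cases "v = 0\<^sub>v p")
      case True thus ?thesis using D by (simp add: scalar_prod_def)
    next
      case False thus ?thesis using pos[OF v] by simp
    qed
  qed
  from inv_exists[OF D inj] have I: "mat_inv D \<in> carrier_mat p p" "D * mat_inv D = 1\<^sub>m p" "mat_inv D * D = 1\<^sub>m p"
    by auto
  let ?I = "mat_inv D"
  have "?I\<^sup>T * D = 1\<^sub>m p" using arg_cong[OF I(2), of transpose_mat] transpose_mult[OF D I(1)] Dsym by simp
  hence "?I\<^sup>T = ?I\<^sup>T * (D * ?I)" using I by simp
  also have "\<dots> = (?I\<^sup>T * D) * ?I" using I D by (simp add: assoc_mult_mat[of _ p p _ p _ p])
  finally have "?I\<^sup>T = ?I" using \<open>?I\<^sup>T * D = 1\<^sub>m p\<close> I by simp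
  thus ?thesis using I Dsym nn by simp
qed

lemma mat3_vec:
  fixes A B C :: "real mat"
  assumes "A \<in> carrier_mat n n" "B \<in> carrier_mat n n" "C \<in> carrier_mat n n" "z \<in> carrier_vec n"
  shows "(A * B * C) *\<^sub>v z = A *\<^sub>v (B *\<^sub>v (C *\<^sub>v z))"
proof -
  have "(A * B * C) *\<^sub>v z = (A * B) *\<^sub>v (C *\<^sub>v z)" by (rule assoc_mult_mat_vec, use assms in auto)
  also have "\<dots> = A *\<^sub>v (B *\<^sub>v (C *\<^sub>v z))" by (rule assoc_mult_mat_vec, use assms in auto)
  finally show ?thesis .
qed

lemma quad_transpose:
  fixes G M :: "real mat"
  assumes G: "G \<in> carrier_mat p d" and M: "M \<in> carrier_mat p p" and a: "a \<in> carrier_vec d"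
  shows "a \<bullet> ((G\<^sup>T * M * G) *\<^sub>v a) = (G *\<^sub>v a) \<bullet> (M *\<^sub>v (G *\<^sub>v a))"
proof -
  have "(G\<^sup>T * M * G) *\<^sub>v a = (G\<^sup>T * M) *\<^sub>v (G *\<^sub>v a)"
    by (rule assoc_mult_mat_vec, use G M a in auto)
  also have "\<dots> = G\<^sup>T *\<^sub>v (M *\<^sub>v (G *\<^sub>v a))"
    by (rule assoc_mult_mat_vec, use G M a in auto)
  finally have "(G\<^sup>T * M * G) *\<^sub>v a = G\<^sup>T *\<^sub>v (M *\<^sub>v (G *\<^sub>v a))" .
  hence "a \<bullet> ((G\<^sup>T * M * G) *\<^sub>v a) = (G\<^sup>T *\<^sub>v (M *\<^sub>v (G *\<^sub>v a))) \<bullet> a"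
    using comm_scalar_prod[of a d] G M a by simp
  also have "\<dots> = (M *\<^sub>v (G *\<^sub>v a)) \<bullet> (G *\<^sub>v a)"
    by (rule transpose_vec_mult_scalar[OF G a], use G M a in simp)
  also have "\<dots> = (G *\<^sub>v a) \<bullet> (M *\<^sub>v (G *\<^sub>v a))" by (rule comm_scalar_prod[of _ p], use G M a in auto)
  finally show ?thesis .
qed

lemma key_ineq:
  fixes G D W :: "real mat"
  assumes G: "G \<in> carrier_mat p d" and D: "D \<in> carrier_mat p p" and W: "W \<in> carrier_mat p p"
    and pd: "pd_mat D" and psdW: "psd_mat W" and p: "p > 0" and a: "a \<in> carrier_vec d"
  shows "a \<bullet> ((G\<^sup>T * W * G) *\<^sub>v a)
     \<le> spec_norm (mat_sqrt W * D * mat_sqrt W) * (a \<bullet> ((G\<^sup>T * mat_inv D * G) *\<^sub>v a))"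
proof -
  let ?I = "mat_inv D"
  let ?S = "mat_sqrt W"
  let ?r = "spec_norm (?S * D * ?S)"
  note DI = pd_inv[OF D pd]
  have I: "?I \<in> carrier_mat p p" and DI1: "D * ?I = 1\<^sub>m p" and It: "?I\<^sup>T = ?I" and Dt: "D\<^sup>T = D"
    and Dnn: "\<And>v. v \<in> carrier_vec p \<Longrightarrow> v \<bullet> (D *\<^sub>v v) \<ge> 0" using DI by auto
  have Sp: "psd_mat ?S" "dim_row ?S = dim_row W" "?S * ?S = W" using mat_sqrt_props[OF psdW] by auto
  have S: "?S \<in> carrier_mat p p" and St: "?S\<^sup>T = ?S"
    using Sp W unfolding psd_mat_def sym_mat_def by auto
  have Wt: "W\<^sup>T = W" and Wnn: "\<And>v. v \<in> carrier_vec p \<Longrightarrow> v \<bullet> (W *\<^sub>v v) \<ge> 0"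
    using psdW W unfolding psd_mat_def sym_mat_def by auto
  define u where "u = G *\<^sub>v a"
  have u: "u \<in> carrier_vec p" unfolding u_def using G a by simp
  define x where "x = ?I *\<^sub>v u"
  define y where "y = W *\<^sub>v u"
  have x: "x \<in> carrier_vec p" and y: "y \<in> carrier_vec p" unfolding x_def y_def using I W u by auto
  define q where "q = u \<bullet> (W *\<^sub>v u)"
  define k where "k = u \<bullet> (?I *\<^sub>v u)"
  have lhs: "a \<bullet> ((G\<^sup>T * W * G) *\<^sub>v a) = q" unfolding q_def u_def by (rule quad_transpose[OF G W a])
  have rhs: "a \<bullet> ((G\<^sup>T * ?I * G) *\<^sub>v a) = k" unfolding k_def u_def by (rule quad_transpose[OF G I a])
  have Dx: "D *\<^sub>v x = u" unfolding x_def using D I u DI1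
    by (metis assoc_mult_mat_vec one_mult_mat_vec)
  have xDy: "x \<bullet> (D *\<^sub>v y) = q"
    using sym_dot[OF D Dt x y] unfolding Dx q_def y_def .
  have xDx: "x \<bullet> (D *\<^sub>v x) = k"
  proof -
    have "x \<bullet> (D *\<^sub>v x) = u \<bullet> x" unfolding Dx using comm_scalar_prod[OF x u] .
    thus ?thesis unfolding k_def x_def .
  qed
  have k0: "k \<ge> 0" using Dnn[OF x] xDx by simp
  have q0: "q \<ge> 0" unfolding q_def using Wnn[OF u] .
  define z where "z = ?S *\<^sub>v u"
  have z: "z \<in> carrier_vec p" unfolding z_def using S u by simp
  have Wz: "W *\<^sub>v u = ?S *\<^sub>v z" unfolding z_def using Sp(3) S u by (metis assoc_mult_mat_vec)
  have yDy: "y \<bullet> (D *\<^sub>v y) = z \<bullet> ((?S * D * ?S) *\<^sub>v z)"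
  proof -
    have "y \<bullet> (D *\<^sub>v y) = (?S *\<^sub>v z) \<bullet> (D *\<^sub>v (?S *\<^sub>v z))" unfolding y_def Wz ..
    also have "\<dots> = z \<bullet> (?S *\<^sub>v (D *\<^sub>v (?S *\<^sub>v z)))"
      using sym_dot[OF S St z, of "D *\<^sub>v (?S *\<^sub>v z)"] D S z by simp
    also have "\<dots> = z \<bullet> ((?S * D * ?S) *\<^sub>v z)" using mat3_vec[OF S D S z] by simp
    finally show ?thesis .
  qed
  have rho: "?S * D * ?S \<in> carrier_mat p p" using S D by simp
  have r0: "?r \<ge> 0" using spec_norm_bound(2)[OF rho p z] .
  have "z \<bullet> ((?S * D * ?S) *\<^sub>v z) \<le> vnorm z * vnorm ((?S * D * ?S) *\<^sub>v z)"
    by (rule dot_le_norms[of _ p], use z rho in auto)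
  also have "\<dots> \<le> vnorm z * (?r * vnorm z)"
    by (rule mult_left_mono[OF spec_norm_bound(1)[OF rho p z] vnorm_ge0])
  also have "\<dots> = ?r * (z \<bullet> z)" using vnorm_sq[of z] by (simp add: power2_eq_square algebra_simps)
  also have "z \<bullet> z = q"
  proof -
    have "z \<bullet> z = u \<bullet> (?S *\<^sub>v z)" unfolding z_def using sym_dot[OF S St u, of "?S *\<^sub>v u"] S u by simp
    thus ?thesis unfolding q_def Wz .
  qed
  finally have yq: "y \<bullet> (D *\<^sub>v y) \<le> ?r * q" unfolding yDy .
  have "q\<^sup>2 \<le> k * (y \<bullet> (D *\<^sub>v y))"
    using quad_cs[OF D Dt Dnn x y] unfolding xDy xDx .
  also have "\<dots> \<le> k * (?r * q)" by (rule mult_left_mono[OF yq k0])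
  finally have qq: "q * q \<le> (?r * k) * q" by (simp add: power2_eq_square algebra_simps)
  have "q \<le> ?r * k"
  proof (cases "q = 0")
    case True thus ?thesis using r0 k0 by simp
  next
    case False hence "q > 0" using q0 by simp
    thus ?thesis using qq by simp
  qed
  thus ?thesis unfolding lhs rhs .
qed

lemma abs_mult_le_sq: "\<bar>(a::real) * b\<bar> \<le> a\<^sup>2 + b\<^sup>2"
proof -
  have "2 * \<bar>a\<bar> * \<bar>b\<bar> \<le> \<bar>a\<bar>\<^sup>2 + \<bar>b\<bar>\<^sup>2" by (rule sum_squares_bound)
  hence "2 * (\<bar>a\<bar> * \<bar>b\<bar>) \<le> a\<^sup>2 + b\<^sup>2" by (simp add: mult.assoc)
  moreover have "\<bar>a\<bar> * \<bar>b\<bar> \<ge> 0" by simp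
  ultimately have "\<bar>a\<bar> * \<bar>b\<bar> \<le> a\<^sup>2 + b\<^sup>2" by linarith
  thus ?thesis by (simp add: abs_mult)
qed

lemma cov_affine:
  fixes A :: "real mat" and c :: "real vec" and M :: "'a measure" and \<epsilon> Z :: "'a \<Rightarrow> real vec"
  assumes A: "A \<in> carrier_mat d p" and c: "c \<in> carrier_vec d"
    and P: "prob_space M"
    and ev: "\<And>w. w \<in> space M \<Longrightarrow> \<epsilon> w \<in> carrier_vec p"
    and meas: "\<And>i. i < p \<Longrightarrow> (\<lambda>w. \<epsilon> w $ i) \<in> borel_measurable M"
    and sq: "\<And>i. i < p \<Longrightarrow> integrable M (\<lambda>w. (\<epsilon> w $ i)\<^sup>2)"
    and mean: "\<And>i. i < p \<Longrightarrow> E M (\<lambda>w. \<epsilon> w $ i) = 0"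
    and var: "cov_mat M \<epsilon> p = \<Delta>"
    and Z: "\<And>w. w \<in> space M \<Longrightarrow> Z w = c + A *\<^sub>v \<epsilon> w"
  shows "cov_mat M Z d = A * \<Delta> * A\<^sup>T"
proof -
  interpret prob_space M by (rule P)
  have int1: "integrable M (\<lambda>w. \<epsilon> w $ k)" if "k < p" for k
    by (rule square_integrable_imp_integrable[OF meas[OF that] sq[OF that]])
  have int2: "integrable M (\<lambda>w. \<epsilon> w $ k * \<epsilon> w $ l)" if "k < p" "l < p" for k l
  proof (rule Bochner_Integration.integrable_bound[where f="\<lambda>w. (\<epsilon> w $ k)\<^sup>2 + (\<epsilon> w $ l)\<^sup>2"])
    show "integrable M (\<lambda>w. (\<epsilon> w $ k)\<^sup>2 + (\<epsilon> w $ l)\<^sup>2)" using sq that by simp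
    show "(\<lambda>w. \<epsilon> w $ k * \<epsilon> w $ l) \<in> borel_measurable M" using meas that by measurable
    show "AE x in M. norm (\<epsilon> x $ k * \<epsilon> x $ l) \<le> norm ((\<epsilon> x $ k)\<^sup>2 + (\<epsilon> x $ l)\<^sup>2)"
      using abs_mult_le_sq by (intro AE_I2) simp
  qed
  have Del: "\<Delta> $$ (k,l) = E M (\<lambda>w. \<epsilon> w $ k * \<epsilon> w $ l)" if "k < p" "l < p" for k l
    using var[symmetric] that mean unfolding cov_mat_def by simp
  have Zi: "Z w $ i = c $ i + (\<Sum>k<p. A $$ (i,k) * \<epsilon> w $ k)" if "w \<in> space M" "i < d" for w i
    using Z[OF that(1)] ev[OF that(1)] A c that(2)
    by (simp add: scalar_prod_def lessThan_atLeast0)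
  have EZ: "E M (\<lambda>w. Z w $ i) = c $ i" if i: "i < d" for i
  proof -
    have "E M (\<lambda>w. Z w $ i) = E M (\<lambda>w. c $ i + (\<Sum>k<p. A $$ (i,k) * \<epsilon> w $ k))"
      by (rule Bochner_Integration.integral_cong[OF refl], use Zi i in simp)
    also have "\<dots> = E M (\<lambda>w. c $ i) + E M (\<lambda>w. \<Sum>k<p. A $$ (i,k) * \<epsilon> w $ k)"
    proof (rule Bochner_Integration.integral_add)
      show "integrable M (\<lambda>w. c $ i)" using emeasure_space_1 by simp
      show "integrable M (\<lambda>w. \<Sum>k<p. A $$ (i,k) * \<epsilon> w $ k)"
        by (intro Bochner_Integration.integrable_sum integrable_mult_right int1) simp
    qed
    also have "E M (\<lambda>w. \<Sum>k<p. A $$ (i,k) * \<epsilon> w $ k) = (\<Sum>k<p. E M (\<lambda>w. A $$ (i,k) * \<epsilon> w $ k))"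
      by (rule Bochner_Integration.integral_sum, intro integrable_mult_right int1, simp)
    also have "\<dots> = (\<Sum>k<p. A $$ (i,k) * E M (\<lambda>w. \<epsilon> w $ k))"
      by simp
    also have "E M (\<lambda>w. c $ i) = c $ i" by (simp add: prob_space)
    finally show ?thesis using mean by simp
  qed
  show ?thesis
  proof (rule eq_matI)
    fix i j assume "i < dim_row (A * \<Delta> * A\<^sup>T)" "j < dim_col (A * \<Delta> * A\<^sup>T)"
    hence i: "i < d" and j: "j < d" using A by auto
    have "cov_mat M Z d $$ (i,j) = E M (\<lambda>w. (Z w $ i - c $ i) * (Z w $ j - c $ j))"
      unfolding cov_mat_def using i j EZ by simp
    also have "\<dots> = E M (\<lambda>w. \<Sum>k<p. \<Sum>l<p. (A $$ (i,k) * A $$ (j,l)) * (\<epsilon> w $ k * \<epsilon> w $ l))"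
      by (rule Bochner_Integration.integral_cong[OF refl], use Zi i j in \<open>simp add: sum_product algebra_simps\<close>)
    also have "\<dots> = (\<Sum>k<p. \<Sum>l<p. (A $$ (i,k) * A $$ (j,l)) * E M (\<lambda>w. \<epsilon> w $ k * \<epsilon> w $ l))"
    proof -
      have "E M (\<lambda>w. \<Sum>k<p. \<Sum>l<p. (A $$ (i,k) * A $$ (j,l)) * (\<epsilon> w $ k * \<epsilon> w $ l))
         = (\<Sum>k<p. E M (\<lambda>w. \<Sum>l<p. (A $$ (i,k) * A $$ (j,l)) * (\<epsilon> w $ k * \<epsilon> w $ l)))"
        by (rule Bochner_Integration.integral_sum, intro Bochner_Integration.integrable_sum integrable_mult_right int2, simp_all)
      also have "\<dots> = (\<Sum>k<p. \<Sum>l<p. E M (\<lambda>w. (A $$ (i,k) * A $$ (j,l)) * (\<epsilon> w $ k * \<epsilon> w $ l)))"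
        by (intro sum.cong refl Bochner_Integration.integral_sum integrable_mult_right int2, simp_all)
      finally show ?thesis by simp
    qed
    also have "\<dots> = (\<Sum>k<p. \<Sum>l<p. A $$ (i,k) * \<Delta> $$ (k,l) * A $$ (j,l))"
      using Del by (intro sum.cong refl) (simp add: algebra_simps)
    also have "\<dots> = (A * \<Delta> * A\<^sup>T) $$ (i,j)"
    proof -
      have D: "\<Delta> \<in> carrier_mat p p" using var[symmetric] unfolding cov_mat_def by simp
      have "(A * \<Delta> * A\<^sup>T) $$ (i,j) = (\<Sum>k=0..<p. A $$ (i,k) * (\<Sum>l=0..<p. \<Delta> $$ (k,l) * A $$ (j,l)))"
        using A D i j by (simp add: scalar_prod_def)
      thus ?thesis by (simp add: lessThan_atLeast0 sum_distrib_left mult.assoc)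
    qed
    finally show "cov_mat M Z d $$ (i,j) = (A * \<Delta> * A\<^sup>T) $$ (i,j)" .
  qed (use A in \<open>auto simp: cov_mat_def\<close>)
qed

lemma red_alg:
  fixes G D :: "real mat"
  assumes G: "G \<in> carrier_mat p d" and D: "D \<in> carrier_mat p p" and pd: "pd_mat D"
    and V: "mat_inv (G\<^sup>T * mat_inv D * G) \<in> carrier_mat d d"
    and KV: "(G\<^sup>T * mat_inv D * G) * mat_inv (G\<^sup>T * mat_inv D * G) = 1\<^sub>m d"
    and VK: "mat_inv (G\<^sup>T * mat_inv D * G) * (G\<^sup>T * mat_inv D * G) = 1\<^sub>m d"
  shows "mat_inv (G\<^sup>T * mat_inv D * G) * G\<^sup>T * mat_inv D \<in> carrier_mat d p"
    "(mat_inv (G\<^sup>T * mat_inv D * G) * G\<^sup>T * mat_inv D) * G = 1\<^sub>m d"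
    "(mat_inv (G\<^sup>T * mat_inv D * G) * G\<^sup>T * mat_inv D) * D * (mat_inv (G\<^sup>T * mat_inv D * G) * G\<^sup>T * mat_inv D)\<^sup>T
       = mat_inv (G\<^sup>T * mat_inv D * G)"
proof -
  let ?I = "mat_inv D"
  let ?K = "G\<^sup>T * mat_inv D * G"
  let ?V = "mat_inv ?K"
  have I: "?I \<in> carrier_mat p p" and DI: "D * ?I = 1\<^sub>m p" and ID: "?I * D = 1\<^sub>m p" and It: "?I\<^sup>T = ?I"
    using pd_inv[OF D pd] by auto
  define B where "B = G\<^sup>T * ?I"
  have B: "B \<in> carrier_mat d p" unfolding B_def using G I by simp
  have Gt: "G\<^sup>T \<in> carrier_mat d p" using G by simp
  have K: "?K = B * G" unfolding B_def ..
  have Kc: "?K \<in> carrier_mat d d" using B G K by simp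
  have Bt: "B\<^sup>T = ?I * G" unfolding B_def using transpose_mult[OF Gt I] It by simp
  have Kt: "?K\<^sup>T = ?K" unfolding K using transpose_mult[OF B G] Bt
    using assoc_mult_mat[OF Gt I G] by (simp add: B_def)
  have Vt: "?V\<^sup>T = ?V"
  proof -
    have "?V\<^sup>T * ?K = 1\<^sub>m d" using arg_cong[OF KV, of transpose_mat] transpose_mult[OF Kc V] Kt by simp
    have Vtc: "?V\<^sup>T \<in> carrier_mat d d" using V by simp
    have "?V\<^sup>T = ?V\<^sup>T * (?K * ?V)" unfolding KV using Vtc by simp
    also have "\<dots> = (?V\<^sup>T * ?K) * ?V" using assoc_mult_mat[OF Vtc Kc V] by simp
    finally show ?thesis using \<open>?V\<^sup>T * ?K = 1\<^sub>m d\<close> V by simp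
  qed
  have A_eq: "?V * G\<^sup>T * ?I = ?V * B" unfolding B_def using V Gt I by simp
  show "?V * G\<^sup>T * ?I \<in> carrier_mat d p" unfolding A_eq using V B by simp
  show "(?V * G\<^sup>T * ?I) * G = 1\<^sub>m d" unfolding A_eq using V B G VK K by simp
  have BDBt: "B * D * B\<^sup>T = ?K"
  proof -
    have "B * D * B\<^sup>T = G\<^sup>T * (?I * D) * (?I * G)" unfolding Bt unfolding B_def using Gt I D G
      by (simp add: assoc_mult_mat[of _ d p _ p _ p] assoc_mult_mat[of _ p p _ p _ d])
    also have "\<dots> = ?K" unfolding ID using Gt I G by simp
    finally show ?thesis .
  qed
  have At: "(?V * B)\<^sup>T = B\<^sup>T * ?V" using transpose_mult[OF V B] Vt by simp
  show "(?V * G\<^sup>T * ?I) * D * (?V * G\<^sup>T * ?I)\<^sup>T = ?V"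
  proof -
    have Btc: "B\<^sup>T \<in> carrier_mat p d" using B by simp
    have BD: "B * D \<in> carrier_mat d p" using B D by simp
    have BtV: "B\<^sup>T * ?V \<in> carrier_mat p d" using Btc V by simp
    have BDBtc: "B * D * B\<^sup>T \<in> carrier_mat d d" using BD Btc by simp
    have "(?V * B) * D * (?V * B)\<^sup>T = (?V * (B * D)) * (B\<^sup>T * ?V)" unfolding At
      using assoc_mult_mat[OF V B D] by simp
    also have "\<dots> = ?V * ((B * D) * (B\<^sup>T * ?V))" using assoc_mult_mat[OF V BD BtV] .
    also have "(B * D) * (B\<^sup>T * ?V) = (B * D * B\<^sup>T) * ?V" using assoc_mult_mat[OF BD Btc V] by simp
    also have "?V * ((B * D * B\<^sup>T) * ?V) = ?V * (B * D * B\<^sup>T) * ?V" using assoc_mult_mat[OF V BDBtc V] by simp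
    also have "\<dots> = ?V" unfolding BDBt using V Kc VK by simp
    finally show ?thesis unfolding A_eq .
  qed
qed

lemma inv_quad_nonneg:
  fixes G D :: "real mat"
  assumes G: "G \<in> carrier_mat p d" and D: "D \<in> carrier_mat p p" and pd: "pd_mat D" and a: "a \<in> carrier_vec d"
  shows "a \<bullet> ((G\<^sup>T * mat_inv D * G) *\<^sub>v a) \<ge> 0"
proof -
  note DI = pd_inv[OF D pd]
  have I: "mat_inv D \<in> carrier_mat p p" and DI1: "D * mat_inv D = 1\<^sub>m p"
    and Dnn: "\<And>v. v \<in> carrier_vec p \<Longrightarrow> v \<bullet> (D *\<^sub>v v) \<ge> 0" using DI by auto
  define u where "u = G *\<^sub>v a"
  have u: "u \<in> carrier_vec p" unfolding u_def using G a by simp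
  define x where "x = mat_inv D *\<^sub>v u"
  have x: "x \<in> carrier_vec p" unfolding x_def using I u by simp
  have Dx: "D *\<^sub>v x = u" unfolding x_def using D I u DI1
    by (metis assoc_mult_mat_vec one_mult_mat_vec)
  have "a \<bullet> ((G\<^sup>T * mat_inv D * G) *\<^sub>v a) = u \<bullet> x"
    unfolding u_def x_def by (rule quad_transpose[OF G I a])
  also have "\<dots> = x \<bullet> (D *\<^sub>v x)" unfolding Dx using comm_scalar_prod[OF u x] .
  also have "\<dots> \<ge> 0" using Dnn[OF x] .
  finally show ?thesis .
qed

lemma diag_quad:
  fixes B :: "real mat"
  assumes B: "B \<in> carrier_mat d d" and dg: "diagonal_mat B" and a: "a \<in> carrier_vec d"
  shows "a \<bullet> (B *\<^sub>v a) = (\<Sum>i<d. B $$ (i,i) * (a $ i)\<^sup>2)"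
proof -
  have "B *\<^sub>v a = vec d (\<lambda>i. B $$ (i,i) * a $ i)"
  proof (rule eq_vecI)
    fix i assume "i < dim_vec (vec d (\<lambda>i. B $$ (i,i) * a $ i))"
    hence i: "i < d" by simp
    have "(B *\<^sub>v a) $ i = (\<Sum>k\<in>{0..<d}. B $$ (i,k) * a $ k)" using B a i by (simp add: scalar_prod_def)
    also have "\<dots> = (\<Sum>k\<in>{0..<d}. if k = i then B $$ (i,i) * a $ i else 0)"
      by (intro sum.cong refl) (use dg B i in \<open>auto simp: diagonal_mat_def\<close>)
    also have "\<dots> = B $$ (i,i) * a $ i" using i by simp
    finally show "(B *\<^sub>v a) $ i = vec d (\<lambda>i. B $$ (i,i) * a $ i) $ i" using i by simp
  qed (use B in simp)
  thus ?thesis using a by (simp add: scalar_prod_def lessThan_atLeast0 power2_eq_square algebra_simps)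
qed

lemma bound_at_p:
  fixes \<mu> :: "real vec" and G D W :: "real mat" and \<xi> :: "real vec"
    and M :: "'a measure" and \<epsilon> :: "'a \<Rightarrow> real vec"
  assumes G: "G \<in> carrier_mat p d" and D: "D \<in> carrier_mat p p" and W: "W \<in> carrier_mat p p"
    and mu: "\<mu> \<in> carrier_vec p" and xi: "\<xi> \<in> carrier_vec d"
    and pd: "pd_mat D" and psdW: "psd_mat W" and p: "p > 0" and d: "d > 0"
    and dg: "diagonal_mat (G\<^sup>T * W * G)"
    and P: "prob_space M"
    and ev: "\<And>w. w \<in> space M \<Longrightarrow> \<epsilon> w \<in> carrier_vec p"
    and meas: "\<And>i. i < p \<Longrightarrow> (\<lambda>w. \<epsilon> w $ i) \<in> borel_measurable M"
    and sq: "\<And>i. i < p \<Longrightarrow> integrable M (\<lambda>w. (\<epsilon> w $ i)\<^sup>2)"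
    and mean: "\<And>i. i < p \<Longrightarrow> E M (\<lambda>w. \<epsilon> w $ i) = 0"
    and var: "cov_mat M \<epsilon> p = D"
    and cg: "cg > 0" and hp: "hh > 0" and C: "C > 0"
    and diagb: "\<And>i. i < d \<Longrightarrow> (G\<^sup>T * W * G) $$ (i,i) \<ge> cg * hh"
    and rb: "spec_norm (mat_sqrt W * D * mat_sqrt W) \<le> C * hh"
  shows "spec_norm (cov_mat M (\<lambda>w. reduction G D \<mu> (\<mu> + G *\<^sub>v \<xi> + \<epsilon> w)) d) \<le> C / cg"
proof -
  let ?K = "G\<^sup>T * mat_inv D * G"
  let ?r = "spec_norm (mat_sqrt W * D * mat_sqrt W)"
  have I: "mat_inv D \<in> carrier_mat p p" using pd_inv[OF D pd] by auto
  have Kc: "?K \<in> carrier_mat d d" using G I by simp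
  have GWG: "G\<^sup>T * W * G \<in> carrier_mat d d" using G W by simp
  define c where "c = cg / C"
  have c: "c > 0" unfolding c_def using cg C by simp
  have Kpos: "a \<bullet> (?K *\<^sub>v a) \<ge> c * (a \<bullet> a)" if a: "a \<in> carrier_vec d" for a
  proof -
    have "cg * hh * (a \<bullet> a) = (\<Sum>i<d. cg * hh * (a $ i)\<^sup>2)"
      using a by (simp add: scalar_prod_def lessThan_atLeast0 power2_eq_square sum_distrib_left)
    also have "\<dots> \<le> (\<Sum>i<d. (G\<^sup>T * W * G) $$ (i,i) * (a $ i)\<^sup>2)"
      by (intro sum_mono mult_right_mono diagb) auto
    also have "\<dots> = a \<bullet> ((G\<^sup>T * W * G) *\<^sub>v a)" using diag_quad[OF GWG dg a] by simp
    also have "\<dots> \<le> ?r * (a \<bullet> (?K *\<^sub>v a))" by (rule key_ineq[OF G D W pd psdW p a])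
    also have "\<dots> \<le> (C * hh) * (a \<bullet> (?K *\<^sub>v a))"
      by (rule mult_right_mono[OF rb inv_quad_nonneg[OF G D pd a]])
    finally have "hh * (cg * (a \<bullet> a)) \<le> hh * (C * (a \<bullet> (?K *\<^sub>v a)))" by (simp add: algebra_simps)
    hence "cg * (a \<bullet> a) \<le> C * (a \<bullet> (?K *\<^sub>v a))" using hp by simp
    hence "(cg / C) * (a \<bullet> a) \<le> a \<bullet> (?K *\<^sub>v a)" using C by (simp add: field_simps)
    thus ?thesis unfolding c_def .
  qed
  have Kinj: "a = 0\<^sub>v d" if a: "a \<in> carrier_vec d" "?K *\<^sub>v a = 0\<^sub>v d" for a
  proof -
    have "c * (a \<bullet> a) \<le> 0" using Kpos[OF a(1)] a by simp
    hence "a \<bullet> a \<le> 0" using c by (simp add: mult_le_0_iff)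
    hence "a \<bullet> a = 0" using dot_self_ge0[of a] by linarith
    thus ?thesis using dot_self_eq0[OF a(1)] by simp
  qed
  have Vp: "mat_inv ?K \<in> carrier_mat d d \<and> ?K * mat_inv ?K = 1\<^sub>m d \<and> mat_inv ?K * ?K = 1\<^sub>m d"
    by (rule inv_exists[OF Kc Kinj])
  hence V: "mat_inv ?K \<in> carrier_mat d d" and KV: "?K * mat_inv ?K = 1\<^sub>m d" and VK: "mat_inv ?K * ?K = 1\<^sub>m d"
    by auto
  note RA = red_alg[OF G D pd V KV VK]
  define A where "A = mat_inv ?K * G\<^sup>T * mat_inv D"
  have A: "A \<in> carrier_mat d p" and AG: "A * G = 1\<^sub>m d" and ADA: "A * D * A\<^sup>T = mat_inv ?K"
    using RA unfolding A_def by auto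
  define cc where "cc = A *\<^sub>v (G *\<^sub>v \<xi>)"
  have cc: "cc \<in> carrier_vec d" unfolding cc_def using A G xi by simp
  have Zeq: "reduction G D \<mu> (\<mu> + G *\<^sub>v \<xi> + \<epsilon> w) = cc + A *\<^sub>v \<epsilon> w" if w: "w \<in> space M" for w
  proof -
    have e: "\<epsilon> w \<in> carrier_vec p" using ev[OF w] .
    have Gx: "G *\<^sub>v \<xi> \<in> carrier_vec p" using G xi by simp
    have "\<mu> + G *\<^sub>v \<xi> + \<epsilon> w - \<mu> = G *\<^sub>v \<xi> + \<epsilon> w"
      by (rule eq_vecI, use mu Gx e in auto)
    hence "reduction G D \<mu> (\<mu> + G *\<^sub>v \<xi> + \<epsilon> w) = A *\<^sub>v (G *\<^sub>v \<xi> + \<epsilon> w)"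
      unfolding reduction_def A_def by simp
    also have "\<dots> = cc + A *\<^sub>v \<epsilon> w" unfolding cc_def
      using mult_add_distrib_mat_vec[OF A Gx e] .
    finally show ?thesis .
  qed
  have cov: "cov_mat M (\<lambda>w. reduction G D \<mu> (\<mu> + G *\<^sub>v \<xi> + \<epsilon> w)) d = mat_inv ?K"
    using cov_affine[OF A cc P ev meas sq mean var Zeq] ADA by simp
  show ?thesis unfolding cov
  proof (rule spec_norm_le[OF V d])
    fix b assume b: "b \<in> carrier_vec d" "vnorm b = 1"
    define a where "a = mat_inv ?K *\<^sub>v b"
    have a: "a \<in> carrier_vec d" unfolding a_def using V b by simp
    have Ka: "?K *\<^sub>v a = b" unfolding a_def using KV Kc V b(1)
      by (metis assoc_mult_mat_vec one_mult_mat_vec)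
    have "c * (vnorm a)\<^sup>2 \<le> a \<bullet> b" using Kpos[OF a] unfolding Ka vnorm_sq .
    also have "\<dots> \<le> vnorm a * vnorm b" by (rule dot_le_norms[OF a b(1)])
    finally have ineq: "c * (vnorm a)\<^sup>2 \<le> vnorm a" using b(2) by simp
    have "vnorm a \<le> 1 / c"
    proof (cases "vnorm a = 0")
      case True thus ?thesis using c by simp
    next
      case False
      hence "vnorm a > 0" using vnorm_ge0[of a] by simp
      hence "c * vnorm a \<le> 1" using ineq by (simp add: power2_eq_square)
      thus ?thesis using c by (simp add: field_simps)
    qed
    thus "vnorm (mat_inv ?K *\<^sub>v b) \<le> C / cg" unfolding a_def c_def using cg C by simp
  qed
qed

theorem lemma1:
  fixes d :: nat
    and \<mu> :: "nat \<Rightarrow> real vec" and \<Gamma> \<Delta> W :: "nat \<Rightarrow> real mat"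
    and \<xi> :: "real vec"
    and M :: "'a measure" and \<epsilon> :: "nat \<Rightarrow> 'a \<Rightarrow> real vec"
    and h :: "nat \<Rightarrow> real" and G :: "real mat"
  assumes dims: "\<And>p. \<mu> p \<in> carrier_vec p" "\<And>p. \<Gamma> p \<in> carrier_mat p d"
      "\<And>p. \<Delta> p \<in> carrier_mat p p" "\<And>p. W p \<in> carrier_mat p p"
      "\<xi> \<in> carrier_vec d"
    and Delta_pd: "\<And>p. pd_mat (\<Delta> p)"
    and W_psd: "\<And>p. psd_mat (W p)"
    and Gamma_norm: "\<And>p. diagonal_mat ((\<Gamma> p)\<^sup>T * W p * \<Gamma> p)"
    and M_prob: "prob_space M"
    and eps_vec: "\<And>p w. w \<in> space M \<Longrightarrow> \<epsilon> p w \<in> carrier_vec p"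
    and eps_meas: "\<And>p i. i < p \<Longrightarrow> (\<lambda>w. \<epsilon> p w $ i) \<in> borel_measurable M"
    and eps_sq_int: "\<And>p i. i < p \<Longrightarrow> integrable M (\<lambda>w. (\<epsilon> p w $ i)\<^sup>2)"
    and eps_mean: "\<And>p i. i < p \<Longrightarrow> E M (\<lambda>w. \<epsilon> p w $ i) = 0"
    and eps_var: "\<And>p. cov_mat M (\<epsilon> p) p = \<Delta> p"
    and h_pos: "\<And>p. h p > 0"
    and h_mono: "mono h"
    and h_O: "h \<in> O(\<lambda>p. real p)"
    and G_props: "G \<in> carrier_mat d d" "diagonal_mat G" "pd_mat G"
    and G_lim: "\<And>i j. i < d \<Longrightarrow> j < d \<Longrightarrow>
        (\<lambda>p. (((\<Gamma> p)\<^sup>T * W p * \<Gamma> p) $$ (i,j)) / h p) \<longlonglongrightarrow> G $$ (i,j)"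
    and rho_O: "(\<lambda>p. spec_norm (mat_sqrt (W p) * \<Delta> p * mat_sqrt (W p))) \<in> O(h)"
  shows "\<exists>B. \<forall>\<^sub>F p in sequentially.
    spec_norm (cov_mat M (\<lambda>w. reduction (\<Gamma> p) (\<Delta> p) (\<mu> p)
                                 (\<mu> p + \<Gamma> p *\<^sub>v \<xi> + \<epsilon> p w)) d) \<le> B"
proof (cases "d = 0")
  case True
  have "spec_norm (cov_mat M (\<lambda>w. reduction (\<Gamma> p) (\<Delta> p) (\<mu> p)
                                 (\<mu> p + \<Gamma> p *\<^sub>v \<xi> + \<epsilon> p w)) d) = Sup ({} :: real set)" for p
  proof -
    have emp: "{vnorm (X *\<^sub>v v) | v. v \<in> carrier_vec (dim_col X) \<and> vnorm v = 1} = {}"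
      if "dim_col X = 0" for X :: "real mat"
    proof -
      have "vnorm v \<noteq> 1" if "v \<in> carrier_vec 0" for v :: "real vec"
      proof -
        have "v = 0\<^sub>v 0" using that by (intro eq_vecI) auto
        thus ?thesis by (simp add: vnorm_def)
      qed
      thus ?thesis using that by auto
    qed
    have "dim_col (cov_mat M (\<lambda>w. reduction (\<Gamma> p) (\<Delta> p) (\<mu> p)
                                 (\<mu> p + \<Gamma> p *\<^sub>v \<xi> + \<epsilon> p w)) d) = 0"
      using True by (simp add: cov_mat_def)
    from emp[OF this] show ?thesis unfolding spec_norm_def by (simp only:)
  qed
  thus ?thesis by (intro exI[of _ "Sup ({} :: real set)"]) simp
next
  case False
  hence d: "d > 0" by simp
  have Gii: "G $$ (i,i) > 0" if i: "i < d" for i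
  proof -
    have dG: "dim_row G = d" using G_props(1) by simp
    have "unit_vec d i \<bullet> (G *\<^sub>v unit_vec d i) > 0"
      using G_props(3) i unfolding pd_mat_def dG by auto
    also have "G *\<^sub>v unit_vec d i = col G i" by (rule mat_unit_col[OF G_props(1) i])
    also have "unit_vec d i \<bullet> col G i = G $$ (i,i)" using G_props(1) i by simp
    finally show ?thesis .
  qed
  define g where "g = Min ((\<lambda>i. G $$ (i,i)) ` {..<d})"
  have gle: "g \<le> G $$ (i,i)" if "i < d" for i unfolding g_def using that by simp
  have g0: "g > 0" unfolding g_def using Gii d by (subst Min_gr_iff) auto
  have ev1: "\<forall>\<^sub>F p in sequentially. \<forall>i\<in>{..<d}. ((\<Gamma> p)\<^sup>T * W p * \<Gamma> p) $$ (i,i) / h p > g / 2"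
  proof (rule eventually_ball_finite)
    show "\<forall>i\<in>{..<d}. \<forall>\<^sub>F p in sequentially. ((\<Gamma> p)\<^sup>T * W p * \<Gamma> p) $$ (i,i) / h p > g / 2"
    proof
      fix i assume "i \<in> {..<d}"
      hence i: "i < d" by simp
      have "g / 2 < G $$ (i,i)" using gle[OF i] g0 by simp
      from order_tendstoD(1)[OF G_lim[OF i i] this]
      show "\<forall>\<^sub>F p in sequentially. ((\<Gamma> p)\<^sup>T * W p * \<Gamma> p) $$ (i,i) / h p > g / 2" .
    qed
  qed simp
  obtain C where C: "C > 0" and ev2: "\<forall>\<^sub>F p in sequentially.
      norm (spec_norm (mat_sqrt (W p) * \<Delta> p * mat_sqrt (W p))) \<le> C * norm (h p)"
    using landau_o.bigE[OF rho_O] by blast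
  have ev3: "\<forall>\<^sub>F p in sequentially. p > 0" by (rule eventually_gt_at_top)
  have "\<forall>\<^sub>F p in sequentially.
    spec_norm (cov_mat M (\<lambda>w. reduction (\<Gamma> p) (\<Delta> p) (\<mu> p)
                                 (\<mu> p + \<Gamma> p *\<^sub>v \<xi> + \<epsilon> p w)) d) \<le> C / (g / 2)"
    using ev1 ev2 ev3
  proof eventually_elim
    case (elim p)
    show ?case
    proof (rule bound_at_p[OF dims(2,3,4,1,5) Delta_pd W_psd elim(3) d Gamma_norm M_prob
          eps_vec eps_meas eps_sq_int eps_mean eps_var _ h_pos C])
      show "g / 2 > 0" using g0 by simp
      show "((\<Gamma> p)\<^sup>T * W p * \<Gamma> p) $$ (i, i) \<ge> g / 2 * h p" if "i < d" for i
      proof -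
        have "g / 2 < ((\<Gamma> p)\<^sup>T * W p * \<Gamma> p) $$ (i, i) / h p" using elim(1) that by simp
        thus ?thesis using h_pos[of p] by (simp add: field_simps)
      qed
      show "spec_norm (mat_sqrt (W p) * \<Delta> p * mat_sqrt (W p)) \<le> C * h p"
        using elim(2) h_pos[of p] by simp
    qed
  qed
  thus ?thesis by blast
qed

end
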